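(* Assume $4d\Lambda\le1$. There exist positive constants $C_1,C_2$ depending only on $d$ such that for all $(\xi,\eta)\in\mathbf{C}^{d+1}$ with $0<\Re\eta<\Lambda$ and $|\Im\xi|<C_1\sqrt{\Re\eta/\Lambda}$, $$\Lambda\max\big[|e(\xi)|^2,|e(\bar\xi)|^2\big]\le\Big(1+C_2|\Im\xi|^2/[\Re\eta/\Lambda]\Big)\,\big|e^\eta-1+\Lambda e(\bar\xi)^*e(\xi)\big|.$$
   Context: $\Lambda>0$. For $\xi\in\mathbf{C}^d$, $e(\xi)\in\mathbf{C}^d$ is the column vector with entries $e_j(\xi)=e^{-i\mathbf{e}_j\cdot\xi}-1$ ($\mathbf{e}_j$ the $j$-th unit vector, so $\mathbf{e}_j\cdot\xi=\xi_j$); $\bar\xi$ is the complex conjugate of $\xi$, $^*$ denotes conjugate transpose, and $|\cdot|$ is the Euclidean norm on $\mathbf{C}^d$. *)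

theory Defs
  imports "HOL-Analysis.Analysis"
begin

definition evec :: "complex^'n \<Rightarrow> complex^'n" where
  "evec \<xi> = (\<chi> j. exp (- \<i> * (\<xi> $ j)) - 1)"

definition cnjvec :: "complex^'n \<Rightarrow> complex^'n" where
  "cnjvec \<xi> = (\<chi> j. cnj (\<xi> $ j))"

definition imvec :: "complex^'n \<Rightarrow> real^'n" where
  "imvec \<xi> = (\<chi> j. Im (\<xi> $ j))"

definition cinner :: "complex^'n \<Rightarrow> complex^'n \<Rightarrow> complex" where
  "cinner u v = (\<Sum>j\<in>UNIV. cnj (u $ j) * v $ j)"

end

theory Submission
  imports Defs
begin
lemma exp_le_quad: fixes b :: real assumes "\<bar>b\<bar> \<le> 1" shows "exp b \<le> 1 + b + b\<^sup>2"
proof (cases "b \<ge> 0")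
  case True thus ?thesis using exp_bound assms by auto
next
  case False
  have "exp (-b) \<ge> 1 - b" using exp_ge_add_one_self[of "-b"] by simp
  have e: "exp b = 1 / exp (-b)" by (simp add: exp_minus field_simps)
  have "(1 - b) * (1 + b + b\<^sup>2) = 1 - b^3" by (simp add: algebra_simps power2_eq_square power3_eq_cube)
  moreover have "0 \<le> -(b^3)" proof -
    have "b * b \<ge> 0" by simp
    hence "(b*b) * b \<le> 0" using False by (intro mult_nonneg_nonpos) auto
    thus ?thesis by (simp add: power3_eq_cube)
  qed
  ultimately have "1 \<le> (1 - b) * (1 + b + b\<^sup>2)" by simp
  have q: "0 \<le> 1 + b + b\<^sup>2" using assms zero_le_power2[of b] by (simp add: abs_le_iff)
  have "(1 - b) * (1 + b + b\<^sup>2) \<le> exp (-b) * (1 + b + b\<^sup>2)"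
    using \<open>exp (-b) \<ge> 1 - b\<close> q by (intro mult_right_mono) auto
  with \<open>1 \<le> _\<close> have "1 \<le> exp (-b) * (1 + b + b\<^sup>2)" by linarith
  thus ?thesis using e exp_gt_zero[of "-b"] by (simp add: divide_le_eq mult.commute)
qed

lemma sq_id: fixes p c s :: real assumes "s\<^sup>2 + c\<^sup>2 = 1"
  shows "(p * c - 1)\<^sup>2 + (- (p * s))\<^sup>2 = p\<^sup>2 - 2 * p * c + 1"
proof -
  have "(p * c - 1)\<^sup>2 + (- (p * s))\<^sup>2 = p\<^sup>2 * (s\<^sup>2 + c\<^sup>2) - 2 * p * c + 1"
    by (simp add: power2_eq_square algebra_simps)
  thus ?thesis using assms by simp
qed

lemma re_id: fixes P Q c s :: real assumes "s\<^sup>2 + c\<^sup>2 = 1" "P * Q = 1"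
  shows "(Q * c - 1) * (P * c - 1) + (Q * s) * (P * s) = 2 - (P + Q) * c"
proof -
  have "(Q * c - 1) * (P * c - 1) + (Q * s) * (P * s) = (P * Q) * (s\<^sup>2 + c\<^sup>2) + 1 - (P + Q) * c"
    by (simp add: power2_eq_square algebra_simps)
  thus ?thesis using assms by simp
qed

lemma comp:
  fixes z :: complex
  defines "a \<equiv> Re z" and "b \<equiv> Im z"
  shows "(cmod (exp (- \<i> * z) - 1))\<^sup>2 = (exp b)\<^sup>2 - 2 * exp b * cos a + 1"
    and "(cmod (exp (- \<i> * cnj z) - 1))\<^sup>2 = (exp (-b))\<^sup>2 - 2 * exp (-b) * cos a + 1"
    and "Re (cnj (exp (- \<i> * cnj z) - 1) * (exp (- \<i> * z) - 1)) = 2 - (exp b + exp (-b)) * cos a"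
    and "Im (cnj (exp (- \<i> * cnj z) - 1) * (exp (- \<i> * z) - 1)) = sin a * (exp b - exp (-b))"
proof -
  have e1: "exp (- \<i> * z) = Complex (exp b * cos a) (- exp b * sin a)"
    by (simp add: exp_eq_polar a_def b_def cis.ctr complex_eq_iff)
  have e2: "exp (- \<i> * cnj z) = Complex (exp (-b) * cos a) (- exp (-b) * sin a)"
    by (simp add: exp_eq_polar a_def b_def cis.ctr complex_eq_iff)
  have sc: "(sin a)\<^sup>2 + (cos a)\<^sup>2 = 1" by simp
  show "(cmod (exp (- \<i> * z) - 1))\<^sup>2 = (exp b)\<^sup>2 - 2 * exp b * cos a + 1"
    unfolding e1 cmod_power2 using sq_id[OF sc, of "exp b"] by simp
  show "(cmod (exp (- \<i> * cnj z) - 1))\<^sup>2 = (exp (-b))\<^sup>2 - 2 * exp (-b) * cos a + 1"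
    unfolding e2 cmod_power2 using sq_id[OF sc, of "exp (-b)"] by simp
  have pq: "exp b * exp (-b) = 1" by (simp add: exp_minus)
  have "Re (cnj (exp (- \<i> * cnj z) - 1) * (exp (- \<i> * z) - 1))
     = (exp (-b) * cos a - 1) * (exp b * cos a - 1) + (exp (-b) * sin a) * (exp b * sin a)"
    unfolding e1 e2 by simp
  also have "\<dots> = 2 - (exp b + exp (-b)) * cos a" by (rule re_id[OF sc pq])
  finally show "Re (cnj (exp (- \<i> * cnj z) - 1) * (exp (- \<i> * z) - 1)) = 2 - (exp b + exp (-b)) * cos a" .
  show "Im (cnj (exp (- \<i> * cnj z) - 1) * (exp (- \<i> * z) - 1)) = sin a * (exp b - exp (-b))"
    unfolding e1 e2 by (simp add: algebra_simps)
qed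

lemma amgm: fixes b t g :: real assumes "g > 0"
  shows "\<bar>b\<bar> * t \<le> (g * t\<^sup>2 + b\<^sup>2 / g) / 2"
proof -
  have "0 \<le> (g * t - \<bar>b\<bar>)\<^sup>2" by simp
  hence "2 * g * (\<bar>b\<bar> * t) \<le> g\<^sup>2 * t\<^sup>2 + b\<^sup>2" by (simp add: power2_eq_square algebra_simps)
  hence "2 * g * (\<bar>b\<bar> * t) / g \<le> (g\<^sup>2 * t\<^sup>2 + b\<^sup>2) / g" using assms by (intro divide_right_mono) auto
  thus ?thesis using assms by (simp add: power2_eq_square field_simps)
qed

lemma amgm2: fixes b t g u :: real assumes "g > 0 \<or> b = 0" "g \<ge> 0" "t\<^sup>2 \<le> 2 * u" "u \<ge> 0"
  shows "\<bar>b\<bar> * \<bar>t\<bar> \<le> g * u + b\<^sup>2 / (2 * g)"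
proof (cases "b = 0")
  case True thus ?thesis using assms by simp
next
  case False
  hence g: "g > 0" using assms by auto
  have "\<bar>b\<bar> * \<bar>t\<bar> \<le> (g * \<bar>t\<bar>\<^sup>2 + b\<^sup>2 / g) / 2" by (rule amgm[OF g])
  also have "g * \<bar>t\<bar>\<^sup>2 \<le> g * (2 * u)" using assms g by (intro mult_left_mono) auto
  hence "(g * \<bar>t\<bar>\<^sup>2 + b\<^sup>2 / g) / 2 \<le> g * u + b\<^sup>2 / (2 * g)" by (simp add: field_simps)
  finally show ?thesis .
qed

lemma scalar:
  fixes a b g :: real
  assumes b1: "\<bar>b\<bar> \<le> 1" and g: "g > 0 \<or> b = 0" "g \<ge> 0"
  defines "u \<equiv> 1 - cos a"
  shows "(exp b)\<^sup>2 - 2 * exp b * cos a + 1 \<le> 4 * b\<^sup>2 + 2 * u + 4 * g * u + 2 * (b\<^sup>2 / g)"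
    and "(exp (-b))\<^sup>2 - 2 * exp (-b) * cos a + 1 \<le> 4 * b\<^sup>2 + 2 * u + 4 * g * u + 2 * (b\<^sup>2 / g)"
    and "\<bar>2 - (exp b + exp (-b)) * cos a - 2 * u\<bar> \<le> 2 * b\<^sup>2"
    and "\<bar>sin a * (exp b - exp (-b))\<bar> \<le> 3 * g * u + 3 / 2 * (b\<^sup>2 / g)"
    and "0 \<le> u" "u \<le> 2"
proof -
  have u0: "0 \<le> u" "u \<le> 2" unfolding u_def using cos_le_one[of a] cos_ge_minus_one[of a] by auto
  thus "0 \<le> u" "u \<le> 2" by auto
  have u2: "u\<^sup>2 \<le> 2 * u" using u0 by (simp add: power2_eq_square mult_right_mono)
  have s2: "(sin a)\<^sup>2 \<le> 2 * u"
  proof -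
    have "(sin a)\<^sup>2 = (1 - cos a) * (1 + cos a)" using sin_squared_eq[of a] by (simp add: algebra_simps power2_eq_square)
    also have "\<dots> \<le> (1 - cos a) * 2" using cos_le_one[of a] by (intro mult_left_mono) auto
    finally show ?thesis by (simp add: u_def)
  qed
  have bb: "b\<^sup>2 \<le> \<bar>b\<bar>"
  proof -
    have "\<bar>b\<bar> * \<bar>b\<bar> \<le> \<bar>b\<bar> * 1" using b1 by (intro mult_left_mono) auto
    thus ?thesis by (simp add: power2_eq_square)
  qed
  have p1: "exp b \<ge> 1 + b" and q1: "exp (-b) \<ge> 1 - b" using exp_ge_add_one_self[of b] exp_ge_add_one_self[of "-b"] by auto
  have p2: "exp b \<le> 1 + b + b\<^sup>2" using exp_le_quad b1 by auto
  have q2: "exp (-b) \<le> 1 - b + b\<^sup>2" using exp_le_quad[of "-b"] b1 by auto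
  have amu: "\<bar>b\<bar> * \<bar>u\<bar> \<le> g * u + b\<^sup>2 / (2 * g)" using amgm2[OF g u2 u0(1)] .
  have ams: "\<bar>b\<bar> * \<bar>sin a\<bar> \<le> g * u + b\<^sup>2 / (2 * g)" using amgm2[OF g s2 u0(1)] .
  have gen: "P\<^sup>2 - 2 * P * cos a + 1 \<le> 4 * b\<^sup>2 + 2 * u + 4 * g * u + 2 * (b\<^sup>2 / g)"
    if h1: "\<bar>P - 1\<bar> \<le> 2 * \<bar>b\<bar>" and h2: "P \<le> 1 + 2 * \<bar>b\<bar>" for P
  proof -
    have e: "P\<^sup>2 - 2 * P * cos a + 1 = (P - 1)\<^sup>2 + 2 * P * u" by (simp add: u_def power2_eq_square algebra_simps)
    have "(P - 1)\<^sup>2 \<le> (2 * \<bar>b\<bar>)\<^sup>2" using h1 by (metis abs_le_square_iff abs_mult abs_abs abs_numeral)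
    hence A: "(P - 1)\<^sup>2 \<le> 4 * b\<^sup>2" by (simp add: power2_eq_square)
    have "2 * P * u \<le> 2 * (1 + 2 * \<bar>b\<bar>) * u" using h2 u0 by (intro mult_right_mono) auto
    also have "\<dots> = 2 * u + 4 * (\<bar>b\<bar> * \<bar>u\<bar>)" using u0 by (simp add: algebra_simps)
    also have "\<dots> \<le> 2 * u + 4 * (g * u + b\<^sup>2 / (2 * g))" using amu by (intro add_left_mono mult_left_mono) auto
    finally have "2 * P * u \<le> 2 * u + 4 * g * u + 2 * (b\<^sup>2 / g)" by (simp add: field_simps)
    thus ?thesis using A e by linarith
  qed
  show "(exp b)\<^sup>2 - 2 * exp b * cos a + 1 \<le> 4 * b\<^sup>2 + 2 * u + 4 * g * u + 2 * (b\<^sup>2 / g)"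
  proof (rule gen)
    have "exp b - 1 \<le> 2 * \<bar>b\<bar>" "1 - exp b \<le> 2 * \<bar>b\<bar>"
      using p1 p2 bb abs_ge_self[of b] abs_ge_minus_self[of b] by linarith+
    thus "\<bar>exp b - 1\<bar> \<le> 2 * \<bar>b\<bar>" "exp b \<le> 1 + 2 * \<bar>b\<bar>" by (auto simp: abs_le_iff)
  qed
  show "(exp (-b))\<^sup>2 - 2 * exp (-b) * cos a + 1 \<le> 4 * b\<^sup>2 + 2 * u + 4 * g * u + 2 * (b\<^sup>2 / g)"
  proof (rule gen)
    have "exp (-b) - 1 \<le> 2 * \<bar>b\<bar>" "1 - exp (-b) \<le> 2 * \<bar>b\<bar>"
      using q1 q2 bb abs_ge_self[of b] abs_ge_minus_self[of b] by linarith+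
    thus "\<bar>exp (-b) - 1\<bar> \<le> 2 * \<bar>b\<bar>" "exp (-b) \<le> 1 + 2 * \<bar>b\<bar>" by (auto simp: abs_le_iff)
  qed
  have "2 - (exp b + exp (-b)) * cos a - 2 * u = (exp b + exp (-b) - 2) * (u - 1)"
    by (simp add: u_def algebra_simps)
  also have "\<bar>\<dots>\<bar> = \<bar>exp b + exp (-b) - 2\<bar> * \<bar>u - 1\<bar>" by (simp add: abs_mult)
  also have "\<dots> \<le> (2 * b\<^sup>2) * 1"
  proof (rule mult_mono)
    have "exp b + exp (-b) - 2 \<ge> 0" "exp b + exp (-b) - 2 \<le> 2 * b\<^sup>2" using p1 q1 p2 q2 by linarith+
    thus "\<bar>exp b + exp (-b) - 2\<bar> \<le> 2 * b\<^sup>2" by simp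
    show "\<bar>u - 1\<bar> \<le> 1" using u0 by auto
  qed auto
  finally show "\<bar>2 - (exp b + exp (-b)) * cos a - 2 * u\<bar> \<le> 2 * b\<^sup>2" by simp
  have "exp b - exp (-b) \<le> 3 * \<bar>b\<bar>" "exp (-b) - exp b \<le> 3 * \<bar>b\<bar>"
    using p1 q1 p2 q2 bb abs_ge_self[of b] abs_ge_minus_self[of b] by linarith+
  hence "\<bar>exp b - exp (-b)\<bar> \<le> 3 * \<bar>b\<bar>" by (auto simp: abs_le_iff)
  hence "\<bar>sin a * (exp b - exp (-b))\<bar> \<le> \<bar>sin a\<bar> * (3 * \<bar>b\<bar>)"
    by (simp add: abs_mult mult_left_mono)
  also have "\<dots> = 3 * (\<bar>b\<bar> * \<bar>sin a\<bar>)" by simp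
  also have "\<dots> \<le> 3 * (g * u + b\<^sup>2 / (2 * g))" using ams by (intro mult_left_mono) auto
  finally show "\<bar>sin a * (exp b - exp (-b))\<bar> \<le> 3 * g * u + 3 / 2 * (b\<^sup>2 / g)" by (simp add: field_simps)
qed


lemma final_alg: fixes x r V D :: real
  assumes "x > 0" "0 \<le> r" "r \<le> 1/64" "V \<ge> 0" "0 \<le> D" "D \<le> x / 8"
  shows "4 * r * x + 2 * V + 4 * (8 * r) * V + 2 * D
     \<le> (1 + 64 * r) * (x + 2 * V - 2 * (r * x) - 3 * (8 * r) * V - 3 / 2 * D)"
proof -
  have e: "(1 + 64 * r) * (x + 2 * V - 2 * (r * x) - 3 * (8 * r) * V - 3 / 2 * D)
     - (4 * r * x + 2 * V + 4 * (8 * r) * V + 2 * D)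
     = x * (1 + 58 * r - 128 * r\<^sup>2) + V * (r * (72 - 1536 * r)) - D * (7/2 + 96 * r)"
    by (simp add: algebra_simps power2_eq_square)
  have "r * (72 - 1536 * r) \<ge> 0" using assms by (intro mult_nonneg_nonneg) auto
  hence A: "V * (r * (72 - 1536 * r)) \<ge> 0" using assms by simp
  have "128 * r\<^sup>2 \<le> 58 * r"
  proof -
    have "r * r \<le> r * (1/64)" using assms by (intro mult_left_mono) auto
    thus ?thesis using assms(2) unfolding power2_eq_square by linarith
  qed
  hence "x * (1 + 58 * r - 128 * r\<^sup>2) \<ge> x * 1" using assms by (intro mult_left_mono) auto
  moreover have "D * (7/2 + 96 * r) \<le> (x / 8) * 5" using assms by (intro mult_mono) auto
  ultimately have "0 \<le> x * (1 + 58 * r - 128 * r\<^sup>2) + V * (r * (72 - 1536 * r)) - D * (7/2 + 96 * r)"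
  proof -
    have key: "\<And>P Q R::real. x * 1 \<le> P \<Longrightarrow> R \<le> x / 8 * 5 \<Longrightarrow> 0 \<le> Q \<Longrightarrow> 0 \<le> P + Q - R"
      using assms(1) by linarith
    show ?thesis using \<open>x * 1 \<le> _\<close> \<open>D * _ \<le> _\<close> A by (rule key)
  qed
  hence "0 \<le> (1 + 64 * r) * (x + 2 * V - 2 * (r * x) - 3 * (8 * r) * V - 3 / 2 * D)
     - (4 * r * x + 2 * V + 4 * (8 * r) * V + 2 * D)" unfolding e .
  thus ?thesis by simp
qed

lemma norm_sq_vec: fixes v :: "'a::real_normed_vector ^'n"
  shows "(norm v)\<^sup>2 = (\<Sum>j\<in>UNIV. (norm (v $ j))\<^sup>2)"
  by (simp add: norm_vec_def L2_set_def sum_nonneg)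


theorem lemma5p1:
  shows "\<exists>C1 C2 :: real. C1 > 0 \<and> C2 > 0 \<and>
    (\<forall>(\<Lambda>::real) (\<xi>::complex^'n) (\<eta>::complex).
       \<Lambda> > 0 \<and> 4 * real CARD('n) * \<Lambda> \<le> 1 \<and>
       0 < Re \<eta> \<and> Re \<eta> < \<Lambda> \<and>
       norm (imvec \<xi>) < C1 * sqrt (Re \<eta> / \<Lambda>) \<longrightarrow>
       \<Lambda> * max ((norm (evec \<xi>))\<^sup>2) ((norm (evec (cnjvec \<xi>)))\<^sup>2)
         \<le> (1 + C2 * (norm (imvec \<xi>))\<^sup>2 / (Re \<eta> / \<Lambda>)) *
            cmod (exp \<eta> - 1 + complex_of_real \<Lambda> * cinner (evec (cnjvec \<xi>)) (evec \<xi>)))"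
proof (rule exI[of _ "1/8"], rule exI[of _ "64"], intro conjI allI impI)
  show "(1/8::real) > 0" "(64::real) > 0" by auto
  fix \<Lambda> :: real and \<xi> :: "complex^'n" and \<eta> :: complex
  assume H: "\<Lambda> > 0 \<and> 4 * real CARD('n) * \<Lambda> \<le> 1 \<and> 0 < Re \<eta> \<and> Re \<eta> < \<Lambda> \<and>
       norm (imvec \<xi>) < 1/8 * sqrt (Re \<eta> / \<Lambda>)"
  define x where "x = Re \<eta>"
  have L0: "\<Lambda> > 0" and Ld: "4 * real CARD('n) * \<Lambda> \<le> 1" and x0: "0 < x" and xL: "x < \<Lambda>"
    and nb: "norm (imvec \<xi>) < 1/8 * sqrt (x / \<Lambda>)" using H by (auto simp: x_def)
  define a where "a = (\<lambda>j. Re (\<xi> $ j))"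
  define b where "b = (\<lambda>j. Im (\<xi> $ j))"
  define u where "u = (\<lambda>j. 1 - cos (a j))"
  define B where "B = (\<Sum>j\<in>UNIV. (b j)\<^sup>2)"
  define U where "U = (\<Sum>j\<in>UNIV. u j)"
  have nbB: "(norm (imvec \<xi>))\<^sup>2 = B" by (simp add: norm_sq_vec imvec_def B_def b_def)
  have xL0: "0 \<le> x / \<Lambda>" using x0 L0 by simp
  have "(norm (imvec \<xi>))\<^sup>2 < (1/8 * sqrt (x / \<Lambda>))\<^sup>2"
    using power_strict_mono[OF nb norm_ge_zero, of 2] by simp
  also have "\<dots> = x / \<Lambda> / 64" using xL0 by (simp add: power_mult_distrib power_divide real_sqrt_pow2)
  finally have Bx: "B < x / \<Lambda> / 64" using nbB by simp
  have B0: "0 \<le> B" unfolding B_def by (intro sum_nonneg) auto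
  define r where "r = \<Lambda> * B / x"
  have r0: "0 \<le> r" using B0 L0 x0 by (simp add: r_def)
  have r64: "r \<le> 1/64" using Bx L0 x0 by (simp add: r_def field_simps)
  have rx: "\<Lambda> * B = r * x" using x0 by (simp add: r_def)
  have B1: "B < 1"
  proof -
    have h: "B * (\<Lambda> * 64) < x" using Bx L0 by (simp add: field_simps)
    have "\<Lambda> * (64 * B) = B * (\<Lambda> * 64)" by simp
    hence "\<Lambda> * (64 * B) < \<Lambda> * 1" using h xL by linarith
    hence "64 * B < 1" using L0 mult_less_cancel_left_pos by blast
    thus ?thesis using B0 by linarith
  qed
  have bj: "(b j)\<^sup>2 \<le> B" for j unfolding B_def by (rule member_le_sum) auto
  have b1: "\<bar>b j\<bar> \<le> 1" for j using bj[of j] B1 abs_square_le_1[of "b j"] by simp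
  define g where "g = 8 * r"
  have g0: "g \<ge> 0" using r0 by (simp add: g_def)
  have gb: "g > 0 \<or> b j = 0" for j
  proof (cases "B = 0")
    case True thus ?thesis using bj[of j] by simp
  next
    case False hence "B > 0" using B0 by simp
    hence "r > 0" using L0 x0 by (simp add: r_def)
    thus ?thesis by (simp add: g_def)
  qed
  note sc = scalar[OF b1 gb g0]
  have D8: "\<Lambda> * (B / g) \<le> x / 8"
  proof (cases "B = 0")
    case True thus ?thesis using x0 by simp
  next
    case False hence "B > 0" using B0 by simp
    thus ?thesis using L0 x0 by (simp add: g_def r_def field_simps)
  qed
  have D0: "0 \<le> \<Lambda> * (B / g)" using L0 B0 g0 by simp
  have U0: "0 \<le> U" unfolding U_def u_def using sc(5) by (intro sum_nonneg) (simp add: u_def)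
  have U2: "U \<le> real CARD('n) * 2" unfolding U_def
    using sum_bounded_above[of UNIV u 2] sc(6) by (simp add: u_def)
  have LU: "2 * (\<Lambda> * U) \<le> 1" using Ld U2 L0
  proof -
    have "\<Lambda> * U \<le> \<Lambda> * (real CARD('n) * 2)" using U2 L0 by (intro mult_left_mono) auto
    moreover have "\<Lambda> * (real CARD('n) * 2) = (4 * real CARD('n) * \<Lambda>) / 2" by simp
    ultimately show ?thesis using Ld by linarith
  qed
  have comps: "evec \<xi> $ j = exp (- \<i> * (\<xi> $ j)) - 1" "evec (cnjvec \<xi>) $ j = exp (- \<i> * cnj (\<xi> $ j)) - 1" for j
    by (simp_all add: evec_def cnjvec_def)
  have sumb: "(\<Sum>j\<in>UNIV. 4 * (b j)\<^sup>2 + 2 * u j + 4 * g * u j + 2 * ((b j)\<^sup>2 / g))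
      = 4 * B + 2 * U + 4 * g * U + 2 * (B / g)"
    by (simp add: B_def U_def sum.distrib sum_distrib_left sum_divide_distrib)
  have M1: "(norm (evec \<xi>))\<^sup>2 \<le> 4 * B + 2 * U + 4 * g * U + 2 * (B / g)"
  proof -
    have "(norm (evec \<xi>))\<^sup>2 = (\<Sum>j\<in>UNIV. (exp (b j))\<^sup>2 - 2 * exp (b j) * cos (a j) + 1)"
      unfolding norm_sq_vec comps comp a_def b_def by simp
    also have "\<dots> \<le> (\<Sum>j\<in>UNIV. 4 * (b j)\<^sup>2 + 2 * u j + 4 * g * u j + 2 * ((b j)\<^sup>2 / g))"
      by (intro sum_mono) (unfold u_def, rule sc(1))
    finally show ?thesis using sumb by simp
  qed
  have M2: "(norm (evec (cnjvec \<xi>)))\<^sup>2 \<le> 4 * B + 2 * U + 4 * g * U + 2 * (B / g)"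
  proof -
    have "(norm (evec (cnjvec \<xi>)))\<^sup>2 = (\<Sum>j\<in>UNIV. (exp (- b j))\<^sup>2 - 2 * exp (- b j) * cos (a j) + 1)"
      unfolding norm_sq_vec comps comp a_def b_def by simp
    also have "\<dots> \<le> (\<Sum>j\<in>UNIV. 4 * (b j)\<^sup>2 + 2 * u j + 4 * g * u j + 2 * ((b j)\<^sup>2 / g))"
      by (intro sum_mono) (unfold u_def, rule sc(2))
    finally show ?thesis using sumb by simp
  qed
  define S where "S = cinner (evec (cnjvec \<xi>)) (evec \<xi>)"
  have ReS: "Re S = (\<Sum>j\<in>UNIV. 2 - (exp (b j) + exp (- b j)) * cos (a j))"
    unfolding S_def cinner_def comps Re_sum comp a_def b_def by simp
  have ImS: "Im S = (\<Sum>j\<in>UNIV. sin (a j) * (exp (b j) - exp (- b j)))"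
    unfolding S_def cinner_def comps Im_sum comp a_def b_def by simp
  have ReS2: "\<bar>Re S - 2 * U\<bar> \<le> 2 * B"
  proof -
    have "Re S - 2 * U = (\<Sum>j\<in>UNIV. 2 - (exp (b j) + exp (- b j)) * cos (a j) - 2 * u j)"
      by (simp add: ReS U_def sum_subtractf sum_distrib_left)
    also have "\<bar>\<dots>\<bar> \<le> (\<Sum>j\<in>UNIV. \<bar>2 - (exp (b j) + exp (- b j)) * cos (a j) - 2 * u j\<bar>)" by (rule sum_abs)
    also have "\<dots> \<le> (\<Sum>j\<in>UNIV. 2 * (b j)\<^sup>2)" by (intro sum_mono) (unfold u_def, rule sc(3))
    finally show ?thesis by (simp add: B_def sum_distrib_left)
  qed
  have ImS2: "\<bar>Im S\<bar> \<le> 3 * g * U + 3 / 2 * (B / g)"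
  proof -
    have "\<bar>Im S\<bar> \<le> (\<Sum>j\<in>UNIV. \<bar>sin (a j) * (exp (b j) - exp (- b j))\<bar>)" unfolding ImS by (rule sum_abs)
    also have "\<dots> \<le> (\<Sum>j\<in>UNIV. 3 * g * u j + 3 / 2 * ((b j)\<^sup>2 / g))" by (intro sum_mono) (unfold u_def, rule sc(4))
    finally show ?thesis by (simp add: B_def U_def sum.distrib sum_distrib_left sum_divide_distrib)
  qed
  define W where "W = exp \<eta> - 1 + complex_of_real \<Lambda> * S"
  have c1: "cmod (1 - complex_of_real \<Lambda> * S) \<le> \<bar>1 - \<Lambda> * Re S\<bar> + \<Lambda> * \<bar>Im S\<bar>"
    using cmod_le[of "1 - complex_of_real \<Lambda> * S"] L0 by (simp add: abs_mult)
  have c2: "\<bar>1 - \<Lambda> * Re S\<bar> \<le> (1 - 2 * (\<Lambda> * U)) + \<Lambda> * (2 * B)"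
  proof -
    have "1 - \<Lambda> * Re S = (1 - 2 * (\<Lambda> * U)) - \<Lambda> * (Re S - 2 * U)" by (simp add: algebra_simps)
    also have "\<bar>\<dots>\<bar> \<le> \<bar>1 - 2 * (\<Lambda> * U)\<bar> + \<bar>\<Lambda> * (Re S - 2 * U)\<bar>" by (rule abs_triangle_ineq4)
    also have "\<bar>\<Lambda> * (Re S - 2 * U)\<bar> \<le> \<Lambda> * (2 * B)" using ReS2 L0 by (simp add: abs_mult)
    finally show ?thesis using LU by simp
  qed
  have c3: "\<Lambda> * \<bar>Im S\<bar> \<le> \<Lambda> * (3 * g * U + 3 / 2 * (B / g))" using ImS2 L0 by (intro mult_left_mono) auto
  have ex: "1 + x \<le> cmod (exp \<eta>)" using exp_ge_add_one_self[of x] by (simp add: x_def)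
  have e1: "cmod (exp \<eta>) - cmod (1 - complex_of_real \<Lambda> * S) \<le> cmod W"
    using norm_triangle_ineq2[of "exp \<eta>" "1 - complex_of_real \<Lambda> * S"] by (simp add: W_def algebra_simps)
  have c3': "\<Lambda> * \<bar>Im S\<bar> \<le> 3 * g * (\<Lambda> * U) + 3 / 2 * (\<Lambda> * (B / g))"
  proof -
    have "\<Lambda> * (3 * g * U + 3 / 2 * (B / g)) = 3 * g * (\<Lambda> * U) + 3 / 2 * (\<Lambda> * (B / g))"
      by (simp add: algebra_simps)
    thus ?thesis using c3 by linarith
  qed
  have c2': "\<Lambda> * (2 * B) = 2 * (r * x)" using rx by simp
  have Wlow: "x + 2 * (\<Lambda> * U) - 2 * (r * x) - 3 * g * (\<Lambda> * U) - 3 / 2 * (\<Lambda> * (B / g)) \<le> cmod W"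
    using e1 c1 c2 c3' ex c2' by linarith
  have LM: "\<Lambda> * max ((norm (evec \<xi>))\<^sup>2) ((norm (evec (cnjvec \<xi>)))\<^sup>2)
      \<le> 4 * r * x + 2 * (\<Lambda> * U) + 4 * g * (\<Lambda> * U) + 2 * (\<Lambda> * (B / g))"
  proof -
    have "\<Lambda> * max ((norm (evec \<xi>))\<^sup>2) ((norm (evec (cnjvec \<xi>)))\<^sup>2) \<le> \<Lambda> * (4 * B + 2 * U + 4 * g * U + 2 * (B / g))"
      using M1 M2 L0 by (intro mult_left_mono) auto
    also have "\<dots> = 4 * (\<Lambda> * B) + 2 * (\<Lambda> * U) + 4 * g * (\<Lambda> * U) + 2 * (\<Lambda> * (B / g))" by (simp add: algebra_simps)
    finally show ?thesis using rx by simp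
  qed
  have fac: "1 + 64 * (norm (imvec \<xi>))\<^sup>2 / (Re \<eta> / \<Lambda>) = 1 + 64 * r"
    using x0 L0 by (simp add: nbB r_def x_def[symmetric] field_simps)
  have fin: "4 * r * x + 2 * (\<Lambda> * U) + 4 * g * (\<Lambda> * U) + 2 * (\<Lambda> * (B / g))
     \<le> (1 + 64 * r) * (x + 2 * (\<Lambda> * U) - 2 * (r * x) - 3 * g * (\<Lambda> * U) - 3 / 2 * (\<Lambda> * (B / g)))"
    unfolding g_def by (rule final_alg[OF x0 r0 r64 _ D0[unfolded g_def] D8[unfolded g_def]]) (use L0 U0 in simp)
  also have "\<dots> \<le> (1 + 64 * r) * cmod W" using Wlow r0 by (intro mult_left_mono) auto
  finally show "\<Lambda> * max ((norm (evec \<xi>))\<^sup>2) ((norm (evec (cnjvec \<xi>)))\<^sup>2)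
         \<le> (1 + 64 * (norm (imvec \<xi>))\<^sup>2 / (Re \<eta> / \<Lambda>)) *
            cmod (exp \<eta> - 1 + complex_of_real \<Lambda> * cinner (evec (cnjvec \<xi>)) (evec \<xi>))"
    using LM unfolding fac W_def S_def by linarith
qed

end
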